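(* Let $G$ be an ordered abelian group, $\beta_0,\beta_1,c\in G$, $\lambda$ a limit ordinal, and $(\gamma_{0,j})_{j<\lambda}$ a well-ordered, monotone increasing family of elements $\ge0$ of $G$ without last element; set $\gamma_{1,j}=\gamma_{0,j}+c$ for $j<\lambda$. Then there exist a subset $A\subset[1,\lambda)$ and a map $\sigma:A\to[1,\lambda)$ such that $\beta_0+\gamma_{0,j_0}\neq\beta_1+\gamma_{1,j_1}$ for all $j_0,j_1<\lambda$ satisfying $j_1\neq\sigma(j_0)$ whenever $j_0\in A$. *)

theory Defs
  imports Main
begin

(* Ordinals are modelled as elements of a well-ordered type 'i.
   The least element of 'i plays the role of the ordinal 0. *)
definition ord_zero :: "'i::wellorder" where
  "ord_zero = (LEAST x. True)"

definition is_limit :: "'i::wellorder \<Rightarrow> bool" where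
  "is_limit lam \<longleftrightarrow> ord_zero < lam \<and> (\<forall>j<lam. \<exists>k. j < k \<and> k < lam)"

definition ord_interval1 :: "'i::wellorder \<Rightarrow> 'i set" where
  "ord_interval1 lam = {j. ord_zero < j \<and> j < lam}"

end

theory Submission
  imports Defs
begin

theorem lemma1p2:
  fixes \<beta>0 \<beta>1 c :: "'g::linordered_ab_group_add"
    and lam :: "'i::wellorder"
    and \<gamma>0 :: "'i \<Rightarrow> 'g"
  assumes "is_limit lam"
    and "strict_mono_on (ord_interval1 lam) \<gamma>0"
    and "\<forall>j\<in>ord_interval1 lam. 0 \<le> \<gamma>0 j"
  shows "\<exists>A \<sigma>. A \<subseteq> ord_interval1 lam \<and> \<sigma> ` A \<subseteq> ord_interval1 lam \<and>
           (\<forall>j0\<in>ord_interval1 lam. \<forall>j1\<in>ord_interval1 lam.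
              (j0 \<in> A \<longrightarrow> j1 \<noteq> \<sigma> j0) \<longrightarrow>
              \<beta>0 + \<gamma>0 j0 \<noteq> \<beta>1 + (\<gamma>0 j1 + c))"
proof -
  let ?I = "ord_interval1 lam"
  let ?P = "\<lambda>j0 j1. j1 \<in> ?I \<and> \<beta>0 + \<gamma>0 j0 = \<beta>1 + (\<gamma>0 j1 + c)"
  define A where "A = {j0 \<in> ?I. \<exists>j1. ?P j0 j1}"
  define \<sigma> where "\<sigma> = (\<lambda>j0. SOME j1. ?P j0 j1)"
  have inj: "inj_on \<gamma>0 ?I"
    using assms(2) strict_mono_on_imp_inj_on by blast
  have s: "?P j0 (\<sigma> j0)" if "j0 \<in> A" for j0
    using that unfolding A_def \<sigma>_def by (metis (mono_tags, lifting) mem_Collect_eq someI_ex)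
  have "A \<subseteq> ?I" unfolding A_def by blast
  moreover have "\<sigma> ` A \<subseteq> ?I" using s by blast
  moreover have "\<forall>j0\<in>?I. \<forall>j1\<in>?I. (j0 \<in> A \<longrightarrow> j1 \<noteq> \<sigma> j0) \<longrightarrow>
              \<beta>0 + \<gamma>0 j0 \<noteq> \<beta>1 + (\<gamma>0 j1 + c)"
  proof (intro ballI impI notI)
    fix j0 j1 assume j0: "j0 \<in> ?I" and j1: "j1 \<in> ?I" and h: "j0 \<in> A \<longrightarrow> j1 \<noteq> \<sigma> j0"
      and e: "\<beta>0 + \<gamma>0 j0 = \<beta>1 + (\<gamma>0 j1 + c)"
    then have "j0 \<in> A" unfolding A_def by blast
    with s have "?P j0 (\<sigma> j0)" by blast
    with e have "\<gamma>0 j1 = \<gamma>0 (\<sigma> j0)" by (metis add_left_cancel add_right_cancel)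
    with inj j1 \<open>?P j0 (\<sigma> j0)\<close> have "j1 = \<sigma> j0" by (meson inj_onD)
    with h \<open>j0 \<in> A\<close> show False by blast
  qed
  ultimately show ?thesis by blast
qed

end
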